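(* There is a computable equivalence structure that is computably categorical but not computably bi-embeddably categorical.
   Context: An equivalence structure $\mathcal{A}=(A,E)$ has universe $A\subseteq\omega$ and an equivalence relation $E$ on $A$; it is computable if its atomic diagram is computable. Two structures are bi-embeddable if each embeds into the other. A computable structure $\mathcal{A}$ is computably bi-embeddably categorical if every computable structure bi-embeddable with $\mathcal{A}$ is bi-embeddable with $\mathcal{A}$ via computable embeddings in both directions. A computable structure $\mathcal{A}$ is computably categorical if for every computable structure $\mathcal{B}$ isomorphic to $\mathcal{A}$ there is a computable isomorphism from $\mathcal{B}$ to $\mathcal{A}$. *)

theory Defs
  imports Main
begin

datatype recf =
    Z
  | S
  | Proj nat
  | Comp recf "recf list"
  | Prim recf recf
  | Mn recf

inductive eval :: "recf \<Rightarrow> nat list \<Rightarrow> nat \<Rightarrow> bool" where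
  eval_Z: "eval Z xs 0"
| eval_S: "eval S (x # xs) (Suc x)"
| eval_Proj: "i < length xs \<Longrightarrow> eval (Proj i) xs (xs ! i)"
| eval_Comp: "list_all2 (\<lambda>g y. eval g xs y) gs ys \<Longrightarrow> eval f ys z \<Longrightarrow> eval (Comp f gs) xs z"
| eval_Prim0: "eval f xs y \<Longrightarrow> eval (Prim f g) (0 # xs) y"
| eval_PrimS: "eval (Prim f g) (n # xs) y \<Longrightarrow> eval g (n # y # xs) z
      \<Longrightarrow> eval (Prim f g) (Suc n # xs) z"
| eval_Mn: "eval f (n # xs) 0 \<Longrightarrow> (\<forall>m<n. \<exists>y. eval f (m # xs) (Suc y))
      \<Longrightarrow> eval (Mn f) xs n"

definition computable_fun :: "(nat \<Rightarrow> nat) \<Rightarrow> bool" where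
  "computable_fun f \<longleftrightarrow> (\<exists>p. \<forall>x. eval p [x] (f x))"

definition computable_set :: "nat set \<Rightarrow> bool" where
  "computable_set A \<longleftrightarrow> (\<exists>p. \<forall>x. eval p [x] (if x \<in> A then 1 else 0))"

definition computable_rel :: "nat rel \<Rightarrow> bool" where
  "computable_rel R \<longleftrightarrow> (\<exists>p. \<forall>x y. eval p [x, y] (if (x, y) \<in> R then 1 else 0))"

type_synonym eqstr = "nat set \<times> nat rel"

definition eq_structure :: "eqstr \<Rightarrow> bool" where
  "eq_structure \<A> \<longleftrightarrow> equiv (fst \<A>) (snd \<A>)"

text \<open>Computable: the atomic diagram is computable, i.e. universe and relation decidable.\<close>
definition computable_eqs :: "eqstr \<Rightarrow> bool" where
  "computable_eqs \<A> \<longleftrightarrow> eq_structure \<A> \<and> computable_set (fst \<A>) \<and> computable_rel (snd \<A>)"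

definition embedding :: "(nat \<Rightarrow> nat) \<Rightarrow> eqstr \<Rightarrow> eqstr \<Rightarrow> bool" where
  "embedding f \<A> \<B> \<longleftrightarrow> f ` fst \<A> \<subseteq> fst \<B> \<and> inj_on f (fst \<A>) \<and>
     (\<forall>x\<in>fst \<A>. \<forall>y\<in>fst \<A>. (x, y) \<in> snd \<A> \<longleftrightarrow> (f x, f y) \<in> snd \<B>)"

definition isomorphism :: "(nat \<Rightarrow> nat) \<Rightarrow> eqstr \<Rightarrow> eqstr \<Rightarrow> bool" where
  "isomorphism f \<A> \<B> \<longleftrightarrow> bij_betw f (fst \<A>) (fst \<B>) \<and>
     (\<forall>x\<in>fst \<A>. \<forall>y\<in>fst \<A>. (x, y) \<in> snd \<A> \<longleftrightarrow> (f x, f y) \<in> snd \<B>)"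

definition isomorphic :: "eqstr \<Rightarrow> eqstr \<Rightarrow> bool" where
  "isomorphic \<A> \<B> \<longleftrightarrow> (\<exists>f. isomorphism f \<A> \<B>)"

definition bi_embeddable :: "eqstr \<Rightarrow> eqstr \<Rightarrow> bool" where
  "bi_embeddable \<A> \<B> \<longleftrightarrow> (\<exists>f. embedding f \<A> \<B>) \<and> (\<exists>g. embedding g \<B> \<A>)"

definition computably_categorical :: "eqstr \<Rightarrow> bool" where
  "computably_categorical \<A> \<longleftrightarrow>
     (\<forall>\<B>. computable_eqs \<B> \<and> isomorphic \<B> \<A> \<longrightarrow>
        (\<exists>f. computable_fun f \<and> isomorphism f \<B> \<A>))"

definition computably_bi_embeddably_categorical :: "eqstr \<Rightarrow> bool" where
  "computably_bi_embeddably_categorical \<A> \<longleftrightarrow>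
     (\<forall>\<B>. computable_eqs \<B> \<and> bi_embeddable \<B> \<A> \<longrightarrow>
        (\<exists>f g. computable_fun f \<and> embedding f \<B> \<A> \<and> computable_fun g \<and> embedding g \<A> \<B>))"

end

theory Submission
  imports Defs "HOL-Library.Nat_Bijection" "HOL-Library.Infinite_Set"
begin

definition rf :: "nat \<Rightarrow> (nat list \<Rightarrow> nat) \<Rightarrow> bool" where
  "rf k f \<longleftrightarrow> (\<exists>p. \<forall>xs. length xs = k \<longrightarrow> eval p xs (f xs))"

lemma rf_cong: "rf k f \<Longrightarrow> (\<And>xs. length xs = k \<Longrightarrow> f xs = g xs) \<Longrightarrow> rf k g"
  unfolding rf_def by metis

lemma rf_const: "rf k (\<lambda>xs. c)"
proof -
  have "eval (((\<lambda>p. Comp S [p]) ^^ c) Z) xs c" for xs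
  proof (induction c)
    case 0 then show ?case by (simp add: eval_Z)
  next
    case (Suc c)
    show ?case
      apply simp
      apply (rule eval_Comp[where ys="[c]"])
      using Suc apply simp
      using eval_S[of c "[]"] by simp
  qed
  then show ?thesis unfolding rf_def by blast
qed

lemma rf_proj: "i < k \<Longrightarrow> rf k (\<lambda>xs. xs ! i)"
  unfolding rf_def by (metis eval_Proj)

lemma progs_exist:
  assumes "\<forall>g\<in>set gs. rf k g"
  shows "\<exists>ps. length ps = length gs \<and> (\<forall>i<length gs. \<forall>xs. length xs = k \<longrightarrow> eval (ps!i) xs ((gs!i) xs))"
  using assms
proof (induction gs)
  case Nil then show ?case by simp
next
  case (Cons g gs)
  then obtain ps where ps: "length ps = length gs" "\<forall>i<length gs. \<forall>xs. length xs = k \<longrightarrow> eval (ps!i) xs ((gs!i) xs)"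
    by auto
  from Cons.prems obtain p where p: "\<forall>xs. length xs = k \<longrightarrow> eval p xs (g xs)" unfolding rf_def by auto
  show ?case
    apply (rule exI[of _ "p # ps"])
    using ps p by (auto simp: nth_Cons split: nat.split)
qed

lemma rf_comp:
  assumes "rf (length gs) f" "\<forall>g\<in>set gs. rf k g"
  shows "rf k (\<lambda>xs. f (map (\<lambda>g. g xs) gs))"
proof -
  obtain ps where ps: "length ps = length gs" "\<forall>i<length gs. \<forall>xs. length xs = k \<longrightarrow> eval (ps!i) xs ((gs!i) xs)"
    using progs_exist[OF assms(2)] by auto
  obtain pf where pf: "\<forall>ys. length ys = length gs \<longrightarrow> eval pf ys (f ys)" using assms(1) unfolding rf_def by auto
  have "eval (Comp pf ps) xs (f (map (\<lambda>g. g xs) gs))" if "length xs = k" for xs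
    apply (rule eval_Comp[where ys="map (\<lambda>g. g xs) gs"])
     apply (rule list_all2_all_nthI)
    using ps that apply auto[2]
    using pf by simp
  then show ?thesis unfolding rf_def by blast
qed

lemma rf_prim:
  assumes "rf k f" "rf (Suc (Suc k)) g"
  shows "rf (Suc k) (\<lambda>xs. rec_nat (f (tl xs)) (\<lambda>n r. g (n # r # tl xs)) (hd xs))"
proof -
  obtain pf where pf: "\<forall>ys. length ys = k \<longrightarrow> eval pf ys (f ys)" using assms(1) unfolding rf_def by auto
  obtain pg where pg: "\<forall>ys. length ys = Suc (Suc k) \<longrightarrow> eval pg ys (g ys)" using assms(2) unfolding rf_def by auto
  have "eval (Prim pf pg) (n # ys) (rec_nat (f ys) (\<lambda>n r. g (n # r # ys)) n)" if "length ys = k" for n ys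
  proof (induction n)
    case 0 then show ?case using pf that by (simp add: eval_Prim0)
  next
    case (Suc n)
    then show ?case using pg that by (auto intro: eval_PrimS)
  qed
  then have "eval (Prim pf pg) xs (rec_nat (f (tl xs)) (\<lambda>n r. g (n # r # tl xs)) (hd xs))" if "length xs = Suc k" for xs
    using that by (cases xs) auto
  then show ?thesis unfolding rf_def by blast
qed

lemma rf_op1: "rf 1 (\<lambda>xs. h (xs!0)) \<Longrightarrow> rf k a \<Longrightarrow> rf k (\<lambda>xs. h (a xs))"
  using rf_comp[of "[a]" "\<lambda>xs. h (xs!0)" k] by simp

lemma rf_op2: "rf 2 (\<lambda>xs. h (xs!0) (xs!1)) \<Longrightarrow> rf k a \<Longrightarrow> rf k b \<Longrightarrow> rf k (\<lambda>xs. h (a xs) (b xs))"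
  using rf_comp[of "[a,b]" "\<lambda>xs. h (xs!0) (xs!1)" k] by (simp add: numeral_2_eq_2 numeral_3_eq_3)

lemma len1: "length xs = Suc 0 \<longleftrightarrow> (\<exists>a. xs = [a])"
  by (cases xs) auto
lemma len2: "length xs = 2 \<longleftrightarrow> (\<exists>a b. xs = [a,b])"
  by (cases xs; cases "tl xs") auto
lemma len3: "length xs = 3 \<longleftrightarrow> (\<exists>a b c. xs = [a,b,c])"
  by (cases xs; cases "tl xs"; cases "tl (tl xs)") auto

lemma rf_S1: "rf 1 (\<lambda>xs. Suc (xs!0))"
  unfolding rf_def by (metis One_nat_def eval_S len1 nth_Cons_0)

lemma rf_Suc: "rf k a \<Longrightarrow> rf k (\<lambda>xs. Suc (a xs))"
  by (rule rf_op1[OF rf_S1])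

lemma rf_add2: "rf 2 (\<lambda>xs. xs!0 + xs!1)"
proof -
  have "rf 2 (\<lambda>xs. rec_nat (tl xs ! 0) (\<lambda>n r. Suc r) (hd xs))"
    using rf_prim[of 1 "\<lambda>ys. ys!0" "\<lambda>zs. Suc (zs!1)"] rf_proj[of 0 1] rf_Suc[OF rf_proj[of 1 3]]
    by (simp add: numeral_2_eq_2 numeral_3_eq_3)
  note rfa = this
  have e: "rec_nat b (\<lambda>n r. Suc r) a = a + b" for a b :: nat by (induction a) auto
  from rfa show ?thesis by (rule rf_cong) (auto simp: len2 e[simplified])
qed

lemma rf_add: "rf k a \<Longrightarrow> rf k b \<Longrightarrow> rf k (\<lambda>xs. a xs + b xs)"
  by (rule rf_op2[OF rf_add2])

lemma rf_pred1: "rf 1 (\<lambda>xs. xs!0 - 1)"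
proof -
  have "rf 1 (\<lambda>xs. rec_nat 0 (\<lambda>n r. n) (hd xs))"
    using rf_prim[of 0 "\<lambda>ys. 0" "\<lambda>zs. zs!0"] rf_const[of 0 0] rf_proj[of 0 2] by (simp add: numeral_2_eq_2 numeral_3_eq_3)
  note rfa = this
  have e: "rec_nat 0 (\<lambda>n r. n) a = a - 1" for a :: nat by (cases a) auto
  from rfa show ?thesis by (rule rf_cong) (auto simp: len1 e[simplified])
qed

lemma rf_sub2: "rf 2 (\<lambda>xs. xs!0 - xs!1)"
proof -
  have "rf 2 (\<lambda>xs. rec_nat (tl xs ! 0) (\<lambda>n r. r - 1) (hd xs))"
    using rf_prim[of 1 "\<lambda>ys. ys!0" "\<lambda>zs. zs!1 - 1"] rf_proj[of 0 1] rf_op1[OF rf_pred1 rf_proj[of 1 3]]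
    by (simp add: numeral_2_eq_2 numeral_3_eq_3)
  note rfa = this
  have e: "rec_nat b (\<lambda>n r. r - 1) a = b - a" for a b :: nat by (induction a) auto
  from rfa have "rf 2 (\<lambda>xs. xs!1 - xs!0)" by (rule rf_cong) (auto simp: len2 e[simplified])
  from rf_op2[OF this rf_proj[of 1 2] rf_proj[of 0 2]] show ?thesis by simp
qed

lemma rf_sub: "rf k a \<Longrightarrow> rf k b \<Longrightarrow> rf k (\<lambda>xs. a xs - b xs)"
  by (rule rf_op2[OF rf_sub2])

lemma rf_mult2: "rf 2 (\<lambda>xs. xs!0 * xs!1)"
proof -
  have "rf 2 (\<lambda>xs. rec_nat 0 (\<lambda>n r. r + tl xs ! 0) (hd xs))"
    using rf_prim[of 1 "\<lambda>ys. 0" "\<lambda>zs. zs!1 + zs!2"] rf_const[of 1 0] rf_add[OF rf_proj[of 1 3] rf_proj[of 2 3]]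
    by (simp add: numeral_2_eq_2 numeral_3_eq_3)
  note rfa = this
  have e: "rec_nat 0 (\<lambda>n r. r + b) a = a * b" for a b :: nat by (induction a) auto
  from rfa show ?thesis by (rule rf_cong) (auto simp: len2 e[simplified])
qed

lemma rf_mult: "rf k a \<Longrightarrow> rf k b \<Longrightarrow> rf k (\<lambda>xs. a xs * b xs)"
  by (rule rf_op2[OF rf_mult2])

lemma rf_tri1: "rf 1 (\<lambda>xs. triangle (xs!0))"
proof -
  have "rf 1 (\<lambda>xs. rec_nat 0 (\<lambda>n r. r + Suc n) (hd xs))"
    using rf_prim[of 0 "\<lambda>ys. 0" "\<lambda>zs. zs!1 + Suc (zs!0)"] rf_const[of 0 0] rf_add[OF rf_proj[of 1 2] rf_Suc[OF rf_proj[of 0 2]]]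
    by (simp add: numeral_2_eq_2 numeral_3_eq_3)
  note rfa = this
  have e: "rec_nat 0 (\<lambda>n r. r + Suc n) a = triangle a" for a :: nat by (induction a) auto
  from rfa show ?thesis by (rule rf_cong) (auto simp: len1 e[simplified])
qed

lemma rf_tri: "rf k a \<Longrightarrow> rf k (\<lambda>xs. triangle (a xs))"
  by (rule rf_op1[OF rf_tri1])

lemma card_less_Suc_P:
  "card {y. y < Suc m \<and> P y} = card {y. y < m \<and> P y} + (if P m then 1 else 0)"
proof -
  have "{y. y < Suc m \<and> P y} = {y. y < m \<and> P y} \<union> (if P m then {m} else {})"
    by (auto simp: less_Suc_eq)
  then show ?thesis by auto
qed

lemma rf_count:
  assumes Q: "rf (Suc k) Q" and b: "rf k b"
  shows "rf k (\<lambda>xs. card {y. y < b xs \<and> Q (y # xs) \<noteq> 0})"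
proof -
  let ?gs = "(\<lambda>zs. zs!0) # map (\<lambda>i zs. zs!(i+2)) [0..<k]"
  have "rf (Suc (Suc k)) (\<lambda>zs. Q (map (\<lambda>g. g zs) ?gs))"
    by (rule rf_comp) (use Q in \<open>auto intro!: rf_proj\<close>)
  then have Q2: "rf (Suc (Suc k)) (\<lambda>zs. Q (hd zs # tl (tl zs)))"
    apply (rule rf_cong)
    apply (rule arg_cong[where f=Q])
    apply (auto intro!: nth_equalityI simp: nth_tl nth_Cons split: nat.split)
    by (metis hd_conv_nth list.size(3) nat.distinct(1))
  have sg: "rf (Suc (Suc k)) (\<lambda>zs. zs!1 + (1 - (1 - Q (hd zs # tl (tl zs)))))"
    by (intro rf_add rf_sub rf_const rf_proj Q2) auto
  have C: "rf (Suc k) (\<lambda>xs. rec_nat 0 (\<lambda>n r. r + (1 - (1 - Q (n # tl xs)))) (hd xs))"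
    using rf_prim[OF rf_const sg] by simp
  have eq: "rec_nat 0 (\<lambda>n r. r + (1 - (1 - Q (n # ys)))) m = card {y. y < m \<and> Q (y # ys) \<noteq> 0}" for m ys
    by (induction m) (auto simp: card_less_Suc_P)
  let ?hs = "b # map (\<lambda>i xs. xs!i) [0..<k]"
  have "rf k (\<lambda>xs. (\<lambda>xs. rec_nat 0 (\<lambda>n r. r + (1 - (1 - Q (n # tl xs)))) (hd xs)) (map (\<lambda>g. g xs) ?hs))"
    by (rule rf_comp) (use C b in \<open>auto intro!: rf_proj\<close>)
  then show ?thesis
    apply (rule rf_cong)
    subgoal for xs
      apply (subgoal_tac "map (\<lambda>g. g xs) ?hs = b xs # xs")
       apply (simp only: list.sel eq)
      by (auto intro!: nth_equalityI simp: nth_Cons split: nat.split)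
    done
qed

definition rp :: "nat \<Rightarrow> (nat list \<Rightarrow> bool) \<Rightarrow> bool" where
  "rp k P \<longleftrightarrow> rf k (\<lambda>xs. if P xs then 1 else 0)"

lemma rp_eq: "rf k a \<Longrightarrow> rf k b \<Longrightarrow> rp k (\<lambda>xs. a xs = b xs)"
  unfolding rp_def
  by (rule rf_cong[where f="\<lambda>xs. 1 - ((a xs - b xs) + (b xs - a xs))"]) (auto intro!: rf_sub rf_add rf_const)

lemma rp_less: "rf k a \<Longrightarrow> rf k b \<Longrightarrow> rp k (\<lambda>xs. a xs < b xs)"
  unfolding rp_def
  by (rule rf_cong[where f="\<lambda>xs. 1 - (1 - (b xs - a xs))"]) (auto intro!: rf_sub rf_add rf_const)

lemma rp_le: "rf k a \<Longrightarrow> rf k b \<Longrightarrow> rp k (\<lambda>xs. a xs \<le> b xs)"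
  unfolding rp_def
  by (rule rf_cong[where f="\<lambda>xs. 1 - (a xs - b xs)"]) (auto intro!: rf_sub rf_add rf_const)

lemma rp_and: "rp k P \<Longrightarrow> rp k Q \<Longrightarrow> rp k (\<lambda>xs. P xs \<and> Q xs)"
  unfolding rp_def
  by (rule rf_cong[where f="\<lambda>xs. (if P xs then 1 else 0) * (if Q xs then 1 else 0)"]) (auto intro!: rf_mult)

lemma rp_not: "rp k P \<Longrightarrow> rp k (\<lambda>xs. \<not> P xs)"
  unfolding rp_def
  by (rule rf_cong[where f="\<lambda>xs. 1 - (if P xs then 1 else 0)"]) (auto intro!: rf_sub rf_const)

lemma rp_or: "rp k P \<Longrightarrow> rp k Q \<Longrightarrow> rp k (\<lambda>xs. P xs \<or> Q xs)"
  using rp_not[OF rp_and[OF rp_not rp_not], of k P Q] by simp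

lemma rp_imp: "rp k P \<Longrightarrow> rp k Q \<Longrightarrow> rp k (\<lambda>xs. P xs \<longrightarrow> Q xs)"
  using rp_or[OF rp_not, of k P Q] by simp

lemma rp_const: "rp k (\<lambda>xs. c)"
  unfolding rp_def by (rule rf_const)

lemma rf_if: "rp k P \<Longrightarrow> rf k a \<Longrightarrow> rf k b \<Longrightarrow> rf k (\<lambda>xs. if P xs then a xs else b xs)"
  unfolding rp_def
  by (rule rf_cong[where f="\<lambda>xs. (if P xs then 1 else 0) * a xs + (1 - (if P xs then 1 else 0)) * b xs"])
    (auto intro!: rf_mult rf_add rf_sub rf_const)

definition pe :: "nat \<Rightarrow> nat \<Rightarrow> nat" where "pe a b = prod_encode (a, b)"
definition pd1 :: "nat \<Rightarrow> nat" where "pd1 z = fst (prod_decode z)"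
definition pd2 :: "nat \<Rightarrow> nat" where "pd2 z = snd (prod_decode z)"

lemma pd1_pe[simp]: "pd1 (pe a b) = a" and pd2_pe[simp]: "pd2 (pe a b) = b"
  by (simp_all add: pd1_def pd2_def pe_def)
lemma pe_pd[simp]: "pe (pd1 z) (pd2 z) = z"
  by (simp add: pd1_def pd2_def pe_def)
lemma pe_eq_iff[simp]: "pe a b = pe c d \<longleftrightarrow> a = c \<and> b = d"
  by (simp add: pe_def)
lemma pe_ge1: "a \<le> pe a b" and pe_ge2: "b \<le> pe a b"
  by (simp_all add: pe_def le_prod_encode_1 le_prod_encode_2)
lemma pd1_le: "pd1 z \<le> z"
  using pe_ge1[where a="pd1 z" and b="pd2 z"] by simp
lemma pd2_le: "pd2 z \<le> z"
  using pe_ge2[where a="pd1 z" and b="pd2 z"] by simp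

lemma rf_pe: "rf k a \<Longrightarrow> rf k b \<Longrightarrow> rf k (\<lambda>xs. pe (a xs) (b xs))"
  unfolding pe_def prod_encode_def
  by (simp, intro rf_add rf_tri)

lemma triangle_ge: "n \<le> triangle n"
  by (induction n) auto

lemma triangle_mono: "m \<le> n \<Longrightarrow> triangle m \<le> triangle n"
  by (induction n rule: dec_induct) auto

definition diag :: "nat \<Rightarrow> nat" where
  "diag z = card {w. w < Suc z \<and> (1 \<le> w \<and> triangle w \<le> z)}"

lemma diag_pe: "diag (pe a b) = a + b"
proof -
  have "{w. w < Suc (pe a b) \<and> (1 \<le> w \<and> triangle w \<le> pe a b)} = {1..a+b}"
  proof (intro set_eqI iffI)
    fix w assume w: "w \<in> {w. w < Suc (pe a b) \<and> (1 \<le> w \<and> triangle w \<le> pe a b)}"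
    have "w \<le> a + b"
    proof (rule ccontr)
      assume "\<not> w \<le> a + b"
      then have "triangle (Suc (a+b)) \<le> triangle w" by (intro triangle_mono) auto
      then show False using w by (simp add: pe_def prod_encode_def)
    qed
    then show "w \<in> {1..a+b}" using w by auto
  next
    fix w assume w: "w \<in> {1..a+b}"
    have "triangle w \<le> triangle (a+b)" using w by (intro triangle_mono) auto
    moreover have "a + b \<le> triangle (a+b)" by (rule triangle_ge)
    ultimately show "w \<in> {w. w < Suc (pe a b) \<and> (1 \<le> w \<and> triangle w \<le> pe a b)}"
      using w by (auto simp: pe_def prod_encode_def)
  qed
  then show ?thesis unfolding diag_def by simp
qed

lemma diag_pd: "diag z = pd1 z + pd2 z"
  using diag_pe[of "pd1 z" "pd2 z"] by simp

lemma pd1_diag: "pd1 z = z - triangle (diag z)"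
proof -
  have "triangle (pd1 z + pd2 z) + pd1 z = z"
    using pe_pd[of z] unfolding pe_def prod_encode_def by simp
  then show ?thesis unfolding diag_pd by linarith
qed

lemma pd2_diag: "pd2 z = diag z - pd1 z"
  unfolding diag_pd by simp

lemma rf_diag1: "rf 1 (\<lambda>xs. diag (xs!0))"
proof -
  have Q: "rf (Suc 1) (\<lambda>ys. if 1 \<le> ys!0 \<and> triangle (ys!0) \<le> ys!1 then 1 else 0)"
    unfolding rp_def[symmetric]
    by (intro rp_and rp_le rf_const rf_proj rf_tri) auto
  have "rf 1 (\<lambda>xs. card {y. y < Suc (xs!0) \<and> (if 1 \<le> (y#xs)!0 \<and> triangle ((y#xs)!0) \<le> (y#xs)!1 then 1 else 0::nat) \<noteq> 0})"
    by (rule rf_count[OF Q]) (intro rf_Suc rf_proj, simp)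
  then show ?thesis
    apply (rule rf_cong)
    apply (simp only: diag_def len1)
    by (auto intro!: arg_cong[where f=card])
qed

lemma rf_pd1: "rf k a \<Longrightarrow> rf k (\<lambda>xs. pd1 (a xs))"
  unfolding pd1_diag
  by (intro rf_sub rf_tri rf_op1[OF rf_diag1])

lemma rf_pd2: "rf k a \<Longrightarrow> rf k (\<lambda>xs. pd2 (a xs))"
  unfolding pd2_diag
  by (intro rf_sub rf_pd1 rf_op1[OF rf_diag1])

lemma cf_rf: "computable_fun f \<longleftrightarrow> rf 1 (\<lambda>xs. f (hd xs))"
  unfolding computable_fun_def rf_def
  by (metis One_nat_def len1 list.sel(1) length_Cons list.size(3))

definition cp :: "(nat \<Rightarrow> bool) \<Rightarrow> bool" where
  "cp P \<longleftrightarrow> computable_fun (\<lambda>x. if P x then 1 else 0)"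

lemma cp_rp: "cp P \<longleftrightarrow> rp 1 (\<lambda>xs. P (hd xs))"
  unfolding cp_def rp_def cf_rf by simp

lemma rf1_hd: "rf 1 (\<lambda>xs. hd xs)"
  by (rule rf_cong[OF rf_proj[of 0 1]]) (auto simp: len1)

lemma rf1_of_cf: "computable_fun f \<Longrightarrow> rf 1 (\<lambda>xs. f (xs!0))"
  unfolding cf_rf by (erule rf_cong) (auto simp: len1)

lemma c_id: "computable_fun (\<lambda>x. x)"
  unfolding cf_rf by (rule rf1_hd)

lemma c_const: "computable_fun (\<lambda>x. c)"
  unfolding cf_rf by (rule rf_const)

lemma c_comp: assumes g: "computable_fun g" and a: "computable_fun a" shows "computable_fun (\<lambda>x. g (a x))"
proof -
  have "rf 1 (\<lambda>xs. g (a (hd xs)))" by (rule rf_op1[OF rf1_of_cf[OF g]]) (use a in \<open>simp add: cf_rf\<close>)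
  then show ?thesis unfolding cf_rf .
qed

lemma p_comp: "cp P \<Longrightarrow> computable_fun a \<Longrightarrow> cp (\<lambda>x. P (a x))"
  unfolding cp_def by (rule c_comp[where g="\<lambda>x. if P x then 1 else 0"])

lemma c_Suc: "computable_fun a \<Longrightarrow> computable_fun (\<lambda>x. Suc (a x))"
  unfolding cf_rf by (rule rf_Suc)
lemma c_add: "computable_fun a \<Longrightarrow> computable_fun b \<Longrightarrow> computable_fun (\<lambda>x. a x + b x)"
  unfolding cf_rf by (rule rf_add)
lemma c_sub: "computable_fun a \<Longrightarrow> computable_fun b \<Longrightarrow> computable_fun (\<lambda>x. a x - b x)"
  unfolding cf_rf by (rule rf_sub)
lemma c_mult: "computable_fun a \<Longrightarrow> computable_fun b \<Longrightarrow> computable_fun (\<lambda>x. a x * b x)"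
  unfolding cf_rf by (rule rf_mult)
lemma c_pe: "computable_fun a \<Longrightarrow> computable_fun b \<Longrightarrow> computable_fun (\<lambda>x. pe (a x) (b x))"
  unfolding cf_rf by (rule rf_pe)
lemma c_pd1: "computable_fun a \<Longrightarrow> computable_fun (\<lambda>x. pd1 (a x))"
  unfolding cf_rf by (rule rf_pd1)
lemma c_pd2: "computable_fun a \<Longrightarrow> computable_fun (\<lambda>x. pd2 (a x))"
  unfolding cf_rf by (rule rf_pd2)
lemma c_if: "cp P \<Longrightarrow> computable_fun a \<Longrightarrow> computable_fun b \<Longrightarrow> computable_fun (\<lambda>x. if P x then a x else b x)"
  unfolding cf_rf cp_rp by (rule rf_if)

lemma p_eq: "computable_fun a \<Longrightarrow> computable_fun b \<Longrightarrow> cp (\<lambda>x. a x = b x)"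
  unfolding cf_rf cp_rp by (rule rp_eq)
lemma p_less: "computable_fun a \<Longrightarrow> computable_fun b \<Longrightarrow> cp (\<lambda>x. a x < b x)"
  unfolding cf_rf cp_rp by (rule rp_less)
lemma p_le: "computable_fun a \<Longrightarrow> computable_fun b \<Longrightarrow> cp (\<lambda>x. a x \<le> b x)"
  unfolding cf_rf cp_rp by (rule rp_le)
lemma p_and: "cp P \<Longrightarrow> cp Q \<Longrightarrow> cp (\<lambda>x. P x \<and> Q x)"
  unfolding cp_rp by (rule rp_and)
lemma p_or: "cp P \<Longrightarrow> cp Q \<Longrightarrow> cp (\<lambda>x. P x \<or> Q x)"
  unfolding cp_rp by (rule rp_or)
lemma p_imp: "cp P \<Longrightarrow> cp Q \<Longrightarrow> cp (\<lambda>x. P x \<longrightarrow> Q x)"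
  unfolding cp_rp by (rule rp_imp)
lemma p_not: "cp P \<Longrightarrow> cp (\<lambda>x. \<not> P x)"
  unfolding cp_rp by (rule rp_not)
lemma p_const: "cp (\<lambda>x. c)"
  unfolding cp_rp by (rule rp_const)
lemma p_iff: "cp P \<Longrightarrow> cp Q \<Longrightarrow> cp (\<lambda>x. P x \<longleftrightarrow> Q x)"
proof -
  assume "cp P" "cp Q"
  moreover have eq: "(\<lambda>x. P x \<longleftrightarrow> Q x) = (\<lambda>x. (P x \<longrightarrow> Q x) \<and> (Q x \<longrightarrow> P x))" by auto
  ultimately show ?thesis by (subst eq) (intro p_and p_imp)
qed

lemma c_count:
  assumes b: "computable_fun b" and P: "cp (\<lambda>z. P (pd1 z) (pd2 z))"
  shows "computable_fun (\<lambda>x. card {y. y < b x \<and> P y x})"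
proof -
  have Pc: "rf 1 (\<lambda>xs. (if P (pd1 (xs!0)) (pd2 (xs!0)) then 1 else 0))"
    using P unfolding cp_def by (rule rf1_of_cf)
  have "rf 2 (\<lambda>ys. (\<lambda>z. if P (pd1 z) (pd2 z) then 1 else 0) (pe (ys!0) (ys!1)))"
    by (rule rf_op1[OF Pc]) (intro rf_pe rf_proj, auto)
  then have Q: "rf (Suc 1) (\<lambda>ys. if P (ys!0) (ys!1) then 1 else 0)"
    by (simp add: numeral_2_eq_2)
  have "rf 1 (\<lambda>xs. card {y. y < b (hd xs) \<and> (\<lambda>ys. if P (ys!0) (ys!1) then 1 else 0::nat) (y # xs) \<noteq> 0})"
    by (rule rf_count[OF Q]) (use b in \<open>simp add: cf_rf\<close>)
  then show ?thesis unfolding cf_rf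
    by (rule rf_cong) (auto simp: len1 intro!: arg_cong[where f=card])
qed

lemma p_ex:
  assumes b: "computable_fun b" and P: "cp (\<lambda>z. P (pd1 z) (pd2 z))"
  shows "cp (\<lambda>x. \<exists>y<b x. P y x)"
proof -
  have "cp (\<lambda>x. 0 < card {y. y < b x \<and> P y x})"
    by (intro p_less c_const c_count b P)
  moreover have "(0 < card {y. y < b x \<and> P y x}) = (\<exists>y<b x. P y x)" for x
  proof -
    have "finite {y. y < b x \<and> P y x}" by simp
    then show ?thesis by (auto simp: card_gt_0_iff)
  qed
  ultimately show ?thesis by simp
qed

lemma p_all:
  assumes b: "computable_fun b" and P: "cp (\<lambda>z. P (pd1 z) (pd2 z))"
  shows "cp (\<lambda>x. \<forall>y<b x. P y x)"
proof -
  have "cp (\<lambda>x. \<not> (\<exists>y<b x. \<not> P y x))"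
    by (intro p_not p_ex b P)
  then show ?thesis by simp
qed

lemma c_prim:
  assumes f: "computable_fun f" and g: "computable_fun (\<lambda>z. g (pd1 z) (pd1 (pd2 z)) (pd2 (pd2 z)))"
    and n: "computable_fun n"
  shows "computable_fun (\<lambda>x. rec_nat (f x) (\<lambda>m r. g m r x) (n x))"
proof -
  have G: "rf (Suc (Suc 1)) (\<lambda>zs. (\<lambda>z. g (pd1 z) (pd1 (pd2 z)) (pd2 (pd2 z))) (pe (zs!0) (pe (zs!1) (zs!2))))"
    by (rule rf_op1[OF rf1_of_cf[OF g]]) (intro rf_pe rf_proj, auto)
  have F: "rf 1 (\<lambda>ys. f (hd ys))" using f unfolding cf_rf .
  have "rf 2 (\<lambda>xs. rec_nat (f (hd (tl xs))) (\<lambda>m r. g m r (tl xs ! 0)) (hd xs))"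
    using rf_prim[OF F G] by (simp add: numeral_2_eq_2)
  then have R: "rf 2 (\<lambda>xs. rec_nat (f (xs!1)) (\<lambda>m r. g m r (xs!1)) (xs!0))"
    by (rule rf_cong) (auto dest!: len2[THEN iffD1])
  have "rf 1 (\<lambda>xs. rec_nat (f (hd xs)) (\<lambda>m r. g m r (hd xs)) (n (hd xs)))"
    by (rule rf_op2[OF R]) (use n in \<open>simp add: cf_rf\<close>, rule rf1_hd)
  then show ?thesis unfolding cf_rf .
qed

definition lhd :: "nat \<Rightarrow> nat" where "lhd c = pd1 (c - 1)"
definition ltl :: "nat \<Rightarrow> nat" where "ltl c = pd2 (c - 1)"
definition lcons :: "nat \<Rightarrow> nat \<Rightarrow> nat" where "lcons x c = Suc (pe x c)"
definition ltln :: "nat \<Rightarrow> nat \<Rightarrow> nat" where "ltln c n = rec_nat c (\<lambda>m r. ltl r) n"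
definition lnth :: "nat \<Rightarrow> nat \<Rightarrow> nat" where "lnth c i = lhd (ltln c i)"
definition llen :: "nat \<Rightarrow> nat" where "llen c = card {n. n < c \<and> ltln c n \<noteq> 0}"
definition mem :: "nat \<Rightarrow> nat \<Rightarrow> bool" where "mem F d \<longleftrightarrow> odd (d div 2 ^ F)"

lemma le_list_encode_Cons: "list_encode xs < list_encode (x # xs)"
  using pe_ge2[of "list_encode xs" x] by (simp add: pe_def list_encode.simps)

lemma length_le_list_encode: "length xs \<le> list_encode xs"
proof (induction xs)
  case (Cons a xs)
  then show ?case using le_prod_encode_2[of "list_encode xs" a] by (simp add: list_encode.simps)
qed simp

lemma lcons_enc[simp]: "lcons x (list_encode xs) = list_encode (x # xs)"
  by (simp add: lcons_def pe_def list_encode.simps)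
lemma lhd_enc[simp]: "lhd (Suc (prod_encode (x, c))) = x"
  by (simp add: lhd_def pe_def[symmetric])
lemma ltl_enc[simp]: "ltl (Suc (prod_encode (x, c))) = c"
  by (simp add: ltl_def pe_def[symmetric])
lemma lhd_lcons[simp]: "lhd (lcons x c) = x"
  by (simp add: lcons_def pe_def)
lemma ltl_lcons[simp]: "ltl (lcons x c) = c"
  by (simp add: lcons_def pe_def)
declare list_encode.simps(2)[simp del]

lemma list_encode_Cons: "list_encode (x # xs) = lcons x (list_encode xs)"
  by (simp add: lcons_def pe_def list_encode.simps)

lemma lhd_Cons[simp]: "lhd (list_encode (x # xs)) = x"
  by (simp only: list_encode_Cons lhd_lcons)
lemma ltl_Cons[simp]: "ltl (list_encode (x # xs)) = list_encode xs"
  by (simp only: list_encode_Cons ltl_lcons)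
lemma list_encode_Cons_neq0[simp]: "list_encode (x # xs) \<noteq> 0"
  by (simp add: list_encode.simps)

lemma list_encode_0_iff[simp]: "list_encode xs = 0 \<longleftrightarrow> xs = []"
  by (cases xs) (auto simp: list_encode.simps)
lemma ltl_0[simp]: "ltl 0 = 0"
proof -
  have "pd2 0 = 0" using pd2_le[of 0] by simp
  then show ?thesis by (simp add: ltl_def)
qed

lemma ltl_list: "ltl (list_encode ys) = list_encode (tl ys)"
  by (cases ys) auto

lemma ltln_enc: "ltln (list_encode xs) n = list_encode (drop n xs)"
proof (induction n)
  case 0 then show ?case by (simp add: ltln_def)
next
  case (Suc n)
  have "ltln (list_encode xs) (Suc n) = ltl (ltln (list_encode xs) n)" by (simp add: ltln_def)
  also have "\<dots> = list_encode (drop (Suc n) xs)"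
    unfolding Suc ltl_list by (simp add: drop_Suc tl_drop)
  finally show ?case .
qed

lemma lnth_enc[simp]: "i < length xs \<Longrightarrow> lnth (list_encode xs) i = xs ! i"
  by (simp add: lnth_def ltln_enc Cons_nth_drop_Suc[symmetric])

lemma llen_enc[simp]: "llen (list_encode xs) = length xs"
proof -
  have "{n. n < list_encode xs \<and> ltln (list_encode xs) n \<noteq> 0} = {n. n < length xs}"
    using length_le_list_encode[of xs] by (auto simp: ltln_enc)
  then show ?thesis by (simp add: llen_def)
qed

lemma mem_set_encode: "finite SS \<Longrightarrow> mem F (set_encode SS) \<longleftrightarrow> F \<in> SS"
  using set_encode_inverse[of SS] unfolding set_decode_def mem_def by blast

lemma mem_less: "mem F d \<Longrightarrow> F < d"
proof -
  assume "mem F d"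
  then have "d div 2 ^ F \<noteq> 0" unfolding mem_def by (simp add: odd_pos)
  then have "2 ^ F \<le> d" by (simp add: div_eq_0_iff not_less)
  moreover have "F < 2 ^ F" by (rule less_exp)
  ultimately show ?thesis by (rule less_le_trans[rotated])
qed

fun enc :: "recf \<Rightarrow> nat" where
  "enc Z = pe 0 0"
| "enc S = pe 1 0"
| "enc (Proj i) = pe 2 i"
| "enc (Comp f gs) = pe 3 (pe (enc f) (list_encode (map enc gs)))"
| "enc (Prim f g) = pe 4 (pe (enc f) (enc g))"
| "enc (Mn f) = pe 5 (enc f)"

definition fct :: "nat \<Rightarrow> nat \<Rightarrow> nat \<Rightarrow> nat" where "fct c a y = pe c (pe a y)"

definition justG :: "(nat \<Rightarrow> bool) \<Rightarrow> (nat \<Rightarrow> bool) \<Rightarrow> nat \<Rightarrow> bool" where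
  "justG M Bd F \<longleftrightarrow>
    (pd1 (pd1 F) = 0 \<and> pd2 (pd2 F) = 0) \<or>
    (pd1 (pd1 F) = 1 \<and> pd1 (pd2 F) \<noteq> 0 \<and> pd2 (pd2 F) = Suc (lhd (pd1 (pd2 F)))) \<or>
    (pd1 (pd1 F) = 2 \<and> pd2 (pd1 F) < llen (pd1 (pd2 F)) \<and> pd2 (pd2 F) = lnth (pd1 (pd2 F)) (pd2 (pd1 F))) \<or>
    (pd1 (pd1 F) = 3 \<and> (\<exists>G. Bd G \<and> M G \<and> pd1 G = pd1 (pd2 (pd1 F)) \<and> pd2 (pd2 G) = pd2 (pd2 F) \<and>
        llen (pd1 (pd2 G)) = llen (pd2 (pd2 (pd1 F))) \<and>
        (\<forall>k<llen (pd2 (pd2 (pd1 F))). M (fct (lnth (pd2 (pd2 (pd1 F))) k) (pd1 (pd2 F)) (lnth (pd1 (pd2 G)) k))))) \<or>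
    (pd1 (pd1 F) = 4 \<and> pd1 (pd2 F) \<noteq> 0 \<and>
       (lhd (pd1 (pd2 F)) = 0 \<longrightarrow> M (fct (pd1 (pd2 (pd1 F))) (ltl (pd1 (pd2 F))) (pd2 (pd2 F)))) \<and>
       (lhd (pd1 (pd2 F)) \<noteq> 0 \<longrightarrow> (\<exists>z. Bd z \<and>
           M (fct (pd1 F) (lcons (lhd (pd1 (pd2 F)) - 1) (ltl (pd1 (pd2 F)))) z) \<and>
           M (fct (pd2 (pd2 (pd1 F))) (lcons (lhd (pd1 (pd2 F)) - 1) (lcons z (ltl (pd1 (pd2 F))))) (pd2 (pd2 F)))))) \<or>
    (pd1 (pd1 F) = 5 \<and> M (fct (pd2 (pd1 F)) (lcons (pd2 (pd2 F)) (pd1 (pd2 F))) 0) \<and>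
       (\<forall>m<pd2 (pd2 F). \<exists>z. Bd z \<and> M (fct (pd2 (pd1 F)) (lcons m (pd1 (pd2 F))) (Suc z))))"

definition closedG :: "(nat \<Rightarrow> bool) \<Rightarrow> (nat \<Rightarrow> bool) \<Rightarrow> bool" where
  "closedG M Bd \<longleftrightarrow> (\<forall>F. M F \<longrightarrow> justG M Bd F)"

lemma fct_simps[simp]: "pd1 (fct c a y) = c" "pd1 (pd2 (fct c a y)) = a" "pd2 (pd2 (fct c a y)) = y"
  by (simp_all add: fct_def)

lemma fct_eq: "G = fct (pd1 G) (pd1 (pd2 G)) (pd2 (pd2 G))"
  by (simp add: fct_def)

lemma justG_mono:
  "justG M Bd F \<Longrightarrow> (\<And>x. M x \<Longrightarrow> M' x) \<Longrightarrow> (\<And>x. Bd x \<Longrightarrow> Bd' x) \<Longrightarrow> justG M' Bd' F"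
  unfolding justG_def
  apply (elim disjE)
  apply (rule disjI1, blast)
  apply (rule disjI2, rule disjI1, blast)
  apply (rule disjI2, rule disjI2, rule disjI1, blast)
  apply (rule disjI2, rule disjI2, rule disjI2, rule disjI1, blast)
  apply (rule disjI2, rule disjI2, rule disjI2, rule disjI2, rule disjI1, blast)
  apply (rule disjI2, rule disjI2, rule disjI2, rule disjI2, rule disjI2, blast)
  done

lemma sound:
  assumes cl: "closedG M Bd"
  shows "M (fct (enc p) (list_encode xs) y) \<Longrightarrow> eval p xs y"
proof (induction p arbitrary: xs y)
  case Z
  then have "justG M Bd (fct (enc Z) (list_encode xs) y)" using cl closedG_def by blast
  then have "y = 0" unfolding justG_def by simp
  then show ?case by (simp add: eval_Z)
next
  case S
  then have "justG M Bd (fct (enc S) (list_encode xs) y)" using cl closedG_def by blast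
  then have "xs \<noteq> [] \<and> y = Suc (lhd (list_encode xs))" unfolding justG_def by simp
  then show ?case by (cases xs) (auto intro: eval_S)
next
  case (Proj i)
  then have "justG M Bd (fct (enc (Proj i)) (list_encode xs) y)" using cl closedG_def by blast
  then have "i < length xs \<and> y = xs ! i" unfolding justG_def by simp
  then show ?case by (auto intro: eval_Proj)
next
  case (Comp f gs)
  then have "justG M Bd (fct (enc (Comp f gs)) (list_encode xs) y)" using cl closedG_def by blast
  then obtain G where G: "M G" "pd1 G = enc f" "pd2 (pd2 G) = y" "llen (pd1 (pd2 G)) = length gs"
    "\<forall>k<length gs. M (fct (enc (gs!k)) (list_encode xs) (lnth (pd1 (pd2 G)) k))"
    unfolding justG_def by auto
  define ys where "ys = list_decode (pd1 (pd2 G))"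
  have ysG: "pd1 (pd2 G) = list_encode ys" by (simp add: ys_def)
  have Gf: "G = fct (enc f) (list_encode ys) y" using fct_eq[of G] G ysG by simp
  have ev_f: "eval f ys y" using Comp.IH(1) G(1) Gf by simp
  have len: "length ys = length gs" using G(4) ysG by simp
  have "list_all2 (\<lambda>g y. eval g xs y) gs ys"
  proof (rule list_all2_all_nthI)
    show "length gs = length ys" using len by simp
    fix k assume k: "k < length gs"
    then have "M (fct (enc (gs!k)) (list_encode xs) (ys ! k))" using G(5) ysG len by simp
    then show "eval (gs!k) xs (ys!k)" using Comp.IH(2) k by simp
  qed
  then show ?case using ev_f by (rule eval_Comp)
next
  case (Prim f g)
  have "M (fct (enc (Prim f g)) (list_encode (n # rest)) y) \<Longrightarrow> eval (Prim f g) (n # rest) y" for n rest y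
  proof (induction n arbitrary: y)
    case 0
    then have "justG M Bd (fct (enc (Prim f g)) (list_encode (0 # rest)) y)" using cl closedG_def by blast
    then have "M (fct (enc f) (list_encode rest) y)" unfolding justG_def by simp
    then show ?case using Prim.IH(1) by (auto intro: eval_Prim0)
  next
    case (Suc n)
    then have "justG M Bd (fct (enc (Prim f g)) (list_encode (Suc n # rest)) y)" using cl closedG_def by blast
    then obtain z where z: "M (fct (enc (Prim f g)) (list_encode (n # rest)) z)"
      "M (fct (enc g) (list_encode (n # z # rest)) y)"
      unfolding justG_def by auto
    show ?case using Suc.IH[OF z(1)] Prim.IH(2)[OF z(2)] by (rule eval_PrimS)
  qed
  moreover have "xs \<noteq> []"
  proof -
    have "justG M Bd (fct (enc (Prim f g)) (list_encode xs) y)" using Prim.prems cl closedG_def by blast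
    then show ?thesis unfolding justG_def by simp
  qed
  ultimately show ?case using Prim.prems by (cases xs) auto
next
  case (Mn f)
  then have "justG M Bd (fct (enc (Mn f)) (list_encode xs) y)" using cl closedG_def by blast
  then have A: "M (fct (enc f) (list_encode (y # xs)) 0)"
    and B: "\<forall>m<y. \<exists>z. M (fct (enc f) (list_encode (m # xs)) (Suc z))"
    unfolding justG_def by auto
  show ?case
    apply (rule eval_Mn)
    using Mn.IH[OF A] apply simp
    using B Mn.IH by blast
qed

lemma list_all2_det:
  "list_all2 (\<lambda>g y. \<forall>y'. R g y' \<longrightarrow> y = y') gs ys \<Longrightarrow> list_all2 R gs ys' \<Longrightarrow> ys = ys'"
proof (induction gs arbitrary: ys ys')
  case Nil then show ?case by simp
next
  case (Cons g gs)
  then show ?case by (auto simp: list_all2_Cons1)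
qed

lemma eval_det: "eval p xs y \<Longrightarrow> eval p xs y' \<Longrightarrow> y = y'"
proof (induction arbitrary: y' rule: eval.induct)
  case (eval_Z xs) from eval_Z.prems show ?case by (cases rule: eval.cases) auto
next
  case (eval_S x xs) from eval_S.prems show ?case by (cases rule: eval.cases) auto
next
  case (eval_Proj i xs) from eval_Proj.prems show ?case by (cases rule: eval.cases) auto
next
  case (eval_Comp xs gs ys f z)
  from eval_Comp.prems obtain ys' where ys': "list_all2 (\<lambda>g y. eval g xs y) gs ys'" "eval f ys' y'"
    by (cases rule: eval.cases) auto
  have L: "list_all2 (\<lambda>g y. \<forall>y'. eval g xs y' \<longrightarrow> y = y') gs ys"
    using eval_Comp(1) by (rule list_all2_mono) auto
  have "ys = ys'" using L ys'(1) by (rule list_all2_det)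
  then show ?case using eval_Comp ys'(2) by simp
next
  case (eval_Prim0 f xs y g)
  from eval_Prim0.prems show ?case by (cases rule: eval.cases) (use eval_Prim0.IH in auto)
next
  case (eval_PrimS f g n xs y z)
  from eval_PrimS.prems obtain y2 where "eval (Prim f g) (n # xs) y2" "eval g (n # y2 # xs) y'"
    by (cases rule: eval.cases) auto
  then show ?case using eval_PrimS.IH by auto
next
  case (eval_Mn f n xs)
  from eval_Mn.prems have A: "eval f (y' # xs) 0" and B: "\<forall>m<y'. \<exists>y. eval f (m # xs) (Suc y)"
    by (cases rule: eval.cases; auto)+
  show ?case
  proof (rule ccontr)
    assume "n \<noteq> y'"
    then consider "n < y'" | "y' < n" by linarith
    then show False
    proof cases
      case 1
      then obtain y where "eval f (n # xs) (Suc y)" using B by blast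
      then show False using eval_Mn.IH(1) by fastforce
    next
      case 2
      then obtain y where "eval f (y' # xs) (Suc y)" "\<forall>y''. eval f (y' # xs) y'' \<longrightarrow> Suc y = y''"
        using eval_Mn.IH(2) by blast
      then show False using A by fastforce
    qed
  qed
qed

lemma closedG_insert:
  "closedG (\<lambda>F. F \<in> A) T \<Longrightarrow> justG (\<lambda>G. G \<in> insert F A) T F \<Longrightarrow> closedG (\<lambda>G. G \<in> insert F A) T"
  unfolding closedG_def using justG_mono[of "\<lambda>F. F \<in> A" T _ "\<lambda>G. G \<in> insert F A" T] by blast

lemma closedG_Un:
  "closedG (\<lambda>F. F \<in> A) T \<Longrightarrow> closedG (\<lambda>F. F \<in> B) T \<Longrightarrow> closedG (\<lambda>F. F \<in> A \<union> B) T"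
  unfolding closedG_def using justG_mono by (metis Un_iff)

lemma closedG_UN:
  "(\<And>i. i \<in> I \<Longrightarrow> closedG (\<lambda>F. F \<in> A i) T) \<Longrightarrow> closedG (\<lambda>F. F \<in> (\<Union>i\<in>I. A i)) T"
  unfolding closedG_def
proof (intro allI impI)
  fix F assume h: "\<And>i. i \<in> I \<Longrightarrow> \<forall>F. F \<in> A i \<longrightarrow> justG (\<lambda>F. F \<in> A i) T F" and F: "F \<in> (\<Union>i\<in>I. A i)"
  then obtain i where i: "i \<in> I" "F \<in> A i" by auto
  then have "justG (\<lambda>F. F \<in> A i) T F" using h by blast
  then show "justG (\<lambda>F. F \<in> (\<Union>i\<in>I. A i)) T F" by (rule justG_mono) (use i in auto)
qed

lemma closedG_empty: "closedG (\<lambda>F. F \<in> {}) T"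
  unfolding closedG_def by simp

lemma complete:
  "eval p xs y \<Longrightarrow> \<exists>SS. finite SS \<and> closedG (\<lambda>F. F \<in> SS) (\<lambda>_. True) \<and> fct (enc p) (list_encode xs) y \<in> SS"
proof (induction rule: eval.induct)
  case (eval_Z xs)
  let ?F = "fct (enc Z) (list_encode xs) 0"
  have "closedG (\<lambda>G. G \<in> insert ?F {}) (\<lambda>_. True)"
    by (rule closedG_insert[OF closedG_empty]) (unfold justG_def, rule disjI1, simp)
  then show ?case by (intro exI[of _ "insert ?F {}"]) simp
next
  case (eval_S x xs)
  let ?F = "fct (enc S) (list_encode (x # xs)) (Suc x)"
  have "closedG (\<lambda>G. G \<in> insert ?F {}) (\<lambda>_. True)"
    by (rule closedG_insert[OF closedG_empty]) (unfold justG_def, rule disjI2, rule disjI1, simp)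
  then show ?case by (intro exI[of _ "insert ?F {}"]) simp
next
  case (eval_Proj i xs)
  let ?F = "fct (enc (Proj i)) (list_encode xs) (xs ! i)"
  have "closedG (\<lambda>G. G \<in> insert ?F {}) (\<lambda>_. True)"
    by (rule closedG_insert[OF closedG_empty]) (unfold justG_def, rule disjI2, rule disjI2, rule disjI1, use eval_Proj in simp)
  then show ?case by (intro exI[of _ "insert ?F {}"]) simp
next
  case (eval_Comp xs gs ys f z)
  have "\<forall>k<length gs. \<exists>SS. finite SS \<and> closedG (\<lambda>F. F \<in> SS) (\<lambda>_. True) \<and> fct (enc (gs!k)) (list_encode xs) (ys!k) \<in> SS"
    using eval_Comp(1) by (simp add: list_all2_conv_all_nth)
  then obtain Sk where Sk: "\<And>k. k < length gs \<Longrightarrow> finite (Sk k) \<and> closedG (\<lambda>F. F \<in> Sk k) (\<lambda>_. True) \<and> fct (enc (gs!k)) (list_encode xs) (ys!k) \<in> Sk k"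
    by metis
  obtain Sf where Sf: "finite Sf" "closedG (\<lambda>F. F \<in> Sf) (\<lambda>_. True)" "fct (enc f) (list_encode ys) z \<in> Sf"
    using eval_Comp(2) by blast
  have len: "length ys = length gs" using eval_Comp(1) by (simp add: list_all2_conv_all_nth)
  let ?A = "Sf \<union> (\<Union>k\<in>{..<length gs}. Sk k)"
  let ?F = "fct (enc (Comp f gs)) (list_encode xs) z"
  have A: "closedG (\<lambda>F. F \<in> ?A) (\<lambda>_. True)"
    by (intro closedG_Un closedG_UN Sf) (use Sk in auto)
  have "justG (\<lambda>G. G \<in> insert ?F ?A) (\<lambda>_. True) ?F"
    unfolding justG_def
    apply (rule disjI2, rule disjI2, rule disjI2, rule disjI1)
    apply (simp add: len)
    apply (rule exI[of _ "fct (enc f) (list_encode ys) z"])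
    using Sf Sk len by auto
  then have "closedG (\<lambda>G. G \<in> insert ?F ?A) (\<lambda>_. True)" by (rule closedG_insert[OF A])
  moreover have "finite (insert ?F ?A)" using Sf Sk by auto
  ultimately show ?case by (intro exI[of _ "insert ?F ?A"] conjI) simp_all
next
  case (eval_Prim0 f xs y g)
  then obtain Sf where Sf: "finite Sf" "closedG (\<lambda>F. F \<in> Sf) (\<lambda>_. True)" "fct (enc f) (list_encode xs) y \<in> Sf"
    by blast
  let ?F = "fct (enc (Prim f g)) (list_encode (0 # xs)) y"
  have "justG (\<lambda>G. G \<in> insert ?F Sf) (\<lambda>_. True) ?F"
    unfolding justG_def using Sf by simp
  then have "closedG (\<lambda>G. G \<in> insert ?F Sf) (\<lambda>_. True)" by (rule closedG_insert[OF Sf(2)])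
  then show ?case using Sf by (intro exI[of _ "insert ?F Sf"] conjI) simp_all
next
  case (eval_PrimS f g n xs y z)
  obtain S1 where S1: "finite S1" "closedG (\<lambda>F. F \<in> S1) (\<lambda>_. True)" "fct (enc (Prim f g)) (list_encode (n # xs)) y \<in> S1"
    using eval_PrimS(3) by blast
  obtain S2 where S2: "finite S2" "closedG (\<lambda>F. F \<in> S2) (\<lambda>_. True)" "fct (enc g) (list_encode (n # y # xs)) z \<in> S2"
    using eval_PrimS(4) by blast
  let ?F = "fct (enc (Prim f g)) (list_encode (Suc n # xs)) z"
  have A: "closedG (\<lambda>F. F \<in> S1 \<union> S2) (\<lambda>_. True)" by (rule closedG_Un[OF S1(2) S2(2)])
  have "justG (\<lambda>G. G \<in> insert ?F (S1 \<union> S2)) (\<lambda>_. True) ?F"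
    unfolding justG_def using S1 S2 by auto
  then have "closedG (\<lambda>G. G \<in> insert ?F (S1 \<union> S2)) (\<lambda>_. True)" by (rule closedG_insert[OF A])
  then show ?case using S1 S2 by (intro exI[of _ "insert ?F (S1 \<union> S2)"] conjI) simp_all
next
  case (eval_Mn f n xs)
  obtain S0 where S0: "finite S0" "closedG (\<lambda>F. F \<in> S0) (\<lambda>_. True)" "fct (enc f) (list_encode (n # xs)) 0 \<in> S0"
    using eval_Mn(2) by blast
  have "\<forall>m<n. \<exists>SS z. finite SS \<and> closedG (\<lambda>F. F \<in> SS) (\<lambda>_. True) \<and> fct (enc f) (list_encode (m # xs)) (Suc z) \<in> SS"
    using eval_Mn(3) by blast
  then obtain Sm zm where Sm: "\<And>m. m < n \<Longrightarrow> finite (Sm m) \<and> closedG (\<lambda>F. F \<in> Sm m) (\<lambda>_. True) \<and> fct (enc f) (list_encode (m # xs)) (Suc (zm m)) \<in> Sm m"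
    by metis
  let ?A = "S0 \<union> (\<Union>m\<in>{..<n}. Sm m)"
  let ?F = "fct (enc (Mn f)) (list_encode xs) n"
  have A: "closedG (\<lambda>F. F \<in> ?A) (\<lambda>_. True)"
    by (intro closedG_Un closedG_UN S0) (use Sm in auto)
  have "justG (\<lambda>G. G \<in> insert ?F ?A) (\<lambda>_. True) ?F"
    unfolding justG_def
    apply (rule disjI2, rule disjI2, rule disjI2, rule disjI2, rule disjI2)
    apply (intro conjI allI impI)
      apply simp
    using S0 apply simp
    subgoal for m using Sm[of m] by (intro exI[of _ "zm m"]) auto
    done
  then have "closedG (\<lambda>G. G \<in> insert ?F ?A) (\<lambda>_. True)" by (rule closedG_insert[OF A])
  moreover have "finite (insert ?F ?A)" using S0 Sm by auto
  ultimately show ?case by (intro exI[of _ "insert ?F ?A"] conjI) simp_all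
qed

definition closed :: "nat \<Rightarrow> bool" where
  "closed d \<longleftrightarrow> (\<forall>F<d. mem F d \<longrightarrow> justG (\<lambda>G. mem G d) (\<lambda>G. G < d) F)"

definition H :: "nat \<Rightarrow> nat \<Rightarrow> nat \<Rightarrow> nat \<Rightarrow> bool" where
  "H e x t y \<longleftrightarrow> (\<exists>d<t. closed d \<and> mem (fct e (lcons x 0) y) d)"

lemma fct_ge: "c \<le> fct c a y" "a \<le> fct c a y" "y \<le> fct c a y"
  unfolding fct_def using pe_ge1 pe_ge2 order.trans by metis+

lemma lcons_0: "lcons x 0 = list_encode [x]"
  using lcons_enc[of x "[]"] by simp

lemma justG_bound:
  assumes j: "justG M (\<lambda>_. True) F" and b: "\<And>G. M G \<Longrightarrow> G < d"
  shows "justG M (\<lambda>G. G < d) F"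
proof -
  have fb: "M (fct c a z) \<Longrightarrow> z < d" for c a z using b[of "fct c a z"] fct_ge(3)[of z c a] by linarith
  have fb2: "M (fct c a (Suc z)) \<Longrightarrow> z < d" for c a z using fb[of c a "Suc z"] by linarith
  from j show ?thesis
    unfolding justG_def
    apply (elim disjE)
    apply (rule disjI1, blast)
    apply (rule disjI2, rule disjI1, blast)
    apply (rule disjI2, rule disjI2, rule disjI1, blast)
    apply (rule disjI2, rule disjI2, rule disjI2, rule disjI1) using b apply blast
    apply (rule disjI2, rule disjI2, rule disjI2, rule disjI2, rule disjI1) using fb apply blast
    apply (rule disjI2, rule disjI2, rule disjI2, rule disjI2, rule disjI2) using fb2 apply blast
    done
qed

lemma closed_set_encode:
  assumes "finite SS" "closedG (\<lambda>F. F \<in> SS) (\<lambda>_. True)"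
  shows "closed (set_encode SS)"
  unfolding closed_def
proof (intro allI impI)
  fix F assume "F < set_encode SS" "mem F (set_encode SS)"
  then have "F \<in> SS" using assms(1) mem_set_encode by blast
  then have "justG (\<lambda>F. F \<in> SS) (\<lambda>_. True) F" using assms(2) unfolding closedG_def by blast
  then have "justG (\<lambda>F. F \<in> SS) (\<lambda>G. G < set_encode SS) F"
    by (rule justG_bound) (use assms(1) mem_set_encode mem_less in blast)
  then show "justG (\<lambda>G. mem G (set_encode SS)) (\<lambda>G. G < set_encode SS) F"
    by (rule justG_mono) (use assms(1) mem_set_encode in auto)
qed

lemma closed_closedG: "closed d \<Longrightarrow> closedG (\<lambda>G. mem G d) (\<lambda>G. G < d)"
  unfolding closed_def closedG_def using mem_less by blast

lemma H_sound: "H (enc p) x t y \<Longrightarrow> eval p [x] y"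
  unfolding H_def lcons_0 using sound closed_closedG by blast

lemma H_mono: "H e x t y \<Longrightarrow> t \<le> t' \<Longrightarrow> H e x t' y"
  unfolding H_def by (meson less_le_trans)

lemma H_bound: "H e x t y \<Longrightarrow> y < t \<and> e < t"
  unfolding H_def using mem_less fct_ge
  by (metis le_less_trans less_trans)

lemma H_complete: "eval p [x] y \<Longrightarrow> \<exists>t0. \<forall>t\<ge>t0. H (enc p) x t y"
proof -
  assume "eval p [x] y"
  from complete[OF this] obtain SS where SS: "finite SS" "closedG (\<lambda>F. F \<in> SS) (\<lambda>_. True)"
    "fct (enc p) (list_encode [x]) y \<in> SS" by blast
  have "H (enc p) x t y" if "t \<ge> Suc (set_encode SS)" for t
    unfolding H_def lcons_0
    using closed_set_encode[OF SS(1,2)] mem_set_encode[OF SS(1)] SS(3) that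
    by (intro exI[of _ "set_encode SS"]) auto
  then show ?thesis by blast
qed

lemmas crules0 = c_id c_const c_Suc c_add c_sub c_mult c_pe c_pd1 c_pd2 c_if
  p_eq p_less p_le p_and p_or p_imp p_not p_const p_iff c_count p_ex p_all

lemma c_lhd: "computable_fun a \<Longrightarrow> computable_fun (\<lambda>x. lhd (a x))"
  unfolding lhd_def by (intro crules0)
lemma c_ltl: "computable_fun a \<Longrightarrow> computable_fun (\<lambda>x. ltl (a x))"
  unfolding ltl_def by (intro crules0)
lemma c_lcons: "computable_fun a \<Longrightarrow> computable_fun b \<Longrightarrow> computable_fun (\<lambda>x. lcons (a x) (b x))"
  unfolding lcons_def by (intro crules0)
lemma c_fct: "computable_fun a \<Longrightarrow> computable_fun b \<Longrightarrow> computable_fun c \<Longrightarrow> computable_fun (\<lambda>x. fct (a x) (b x) (c x))"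
  unfolding fct_def by (intro crules0)
lemma c_ltln: "computable_fun a \<Longrightarrow> computable_fun b \<Longrightarrow> computable_fun (\<lambda>x. ltln (a x) (b x))"
  unfolding ltln_def by (intro c_prim c_ltl crules0)
lemma c_lnth: "computable_fun a \<Longrightarrow> computable_fun b \<Longrightarrow> computable_fun (\<lambda>x. lnth (a x) (b x))"
  unfolding lnth_def by (intro c_lhd c_ltln)
lemma c_llen: assumes a: "computable_fun a" shows "computable_fun (\<lambda>x. llen (a x))"
  unfolding llen_def by (intro c_ltln c_comp[OF a] crules0 a)

lemma pow2_rec: "(2::nat) ^ n = rec_nat 1 (\<lambda>m r. 2 * r) n"
  by (induction n) auto

lemma c_pow2: "computable_fun a \<Longrightarrow> computable_fun (\<lambda>x. 2 ^ a x)"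
  unfolding pow2_rec by (intro c_prim crules0)

lemma div_card: "(a::nat) div b = (if b = 0 then 0 else card {q. q < a \<and> Suc q * b \<le> a})"
proof (cases "b = 0")
  case False
  have "{q. q < a \<and> Suc q * b \<le> a} = {q. q < a div b}"
  proof (intro set_eqI iffI)
    fix q assume "q \<in> {q. q < a \<and> Suc q * b \<le> a}"
    then have "Suc q \<le> a div b" using False by (simp add: less_eq_div_iff_mult_less_eq)
    then show "q \<in> {q. q < a div b}" by simp
  next
    fix q assume "q \<in> {q. q < a div b}"
    then have "Suc q \<le> a div b" by simp
    then have "Suc q * b \<le> a" using False by (simp add: less_eq_div_iff_mult_less_eq)
    moreover have "q < a" using \<open>q \<in> {q. q < a div b}\<close> div_le_dividend[of a b] by (simp only: mem_Collect_eq)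
    ultimately show "q \<in> {q. q < a \<and> Suc q * b \<le> a}" by simp
  qed
  then show ?thesis using False by simp
qed simp

lemma c_div: assumes a: "computable_fun a" and b: "computable_fun b" shows "computable_fun (\<lambda>x. a x div b x)"
  by (subst div_card) (intro crules0 c_comp[OF a] c_comp[OF b] a b)

lemma p_mem: "computable_fun a \<Longrightarrow> computable_fun b \<Longrightarrow> cp (\<lambda>x. mem (a x) (b x))"
proof -
  assume a: "computable_fun a" and b: "computable_fun b"
  have e: "odd (v::nat) \<longleftrightarrow> v - 2 * (v div 2) = 1" for v by presburger
  show ?thesis unfolding mem_def e
    by (intro crules0 c_div c_pow2 a b)
qed

lemmas crules = crules0 c_lhd c_ltl c_lcons c_fct c_ltln c_lnth c_llen c_pow2 c_div p_mem

lemma cp_closed: "cp (\<lambda>d. closed d)"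
  unfolding closed_def justG_def
  apply (intro crules)
  done

lemma p_H: assumes e: "computable_fun e" and x: "computable_fun x" and t: "computable_fun t" and y: "computable_fun y"
  shows "cp (\<lambda>w. H (e w) (x w) (t w) (y w))"
  unfolding H_def by (intro crules p_comp[OF cp_closed] c_comp[OF e] c_comp[OF x] c_comp[OF t] c_comp[OF y] e x t y)

lemma rel_of_cp: assumes "cp (\<lambda>z. (pd1 z, pd2 z) \<in> R)" shows "computable_rel R"
proof -
  have "rf 2 (\<lambda>xs. (\<lambda>z. if (pd1 z, pd2 z) \<in> R then 1 else 0) (pe (xs!0) (xs!1)))"
    by (rule rf_op1[OF rf1_of_cf]) (use assms in \<open>simp add: cp_def\<close>, intro rf_pe rf_proj, auto)
  then obtain p where p: "\<forall>xs. length xs = 2 \<longrightarrow> eval p xs (if (xs!0, xs!1) \<in> R then 1 else 0)"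
    unfolding rf_def by auto
  have "eval p [x, y] (if (x, y) \<in> R then 1 else 0)" for x y using p[rule_format, of "[x,y]"] by simp
  then show ?thesis unfolding computable_rel_def by blast
qed

lemma cp_of_rel: assumes "computable_rel R" shows "cp (\<lambda>z. (pd1 z, pd2 z) \<in> R)"
proof -
  obtain p where p: "\<forall>x y. eval p [x, y] (if (x, y) \<in> R then 1 else 0)"
    using assms unfolding computable_rel_def by blast
  have "rf 2 (\<lambda>xs. if (xs!0, xs!1) \<in> R then 1 else 0)"
    unfolding rf_def using p by (metis len2 nth_Cons_0 nth_Cons_Suc One_nat_def)
  then have "rf 1 (\<lambda>xs. if (pd1 (hd xs), pd2 (hd xs)) \<in> R then 1 else 0)"
    using rf_op2[where h="\<lambda>a b. if (a, b) \<in> R then 1 else 0", OF _ rf_pd1[OF rf1_hd] rf_pd2[OF rf1_hd]]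
    by simp
  then show ?thesis unfolding cp_def cf_rf .
qed

lemma p_rel: "computable_rel R \<Longrightarrow> computable_fun a \<Longrightarrow> computable_fun b \<Longrightarrow> cp (\<lambda>x. (a x, b x) \<in> R)"
  using p_comp[OF cp_of_rel, of R "\<lambda>x. pe (a x) (b x)"] c_pe by simp

lemma p_set: "computable_set U \<Longrightarrow> computable_fun a \<Longrightarrow> cp (\<lambda>x. a x \<in> U)"
  unfolding computable_set_def using p_comp[of "\<lambda>x. x \<in> U" a]
  by (simp add: cp_def computable_fun_def)

lemma cp_set: "cp (\<lambda>x. x \<in> U) \<Longrightarrow> computable_set U"
  unfolding computable_set_def cp_def computable_fun_def by simp

section \<open>Counting bijection\<close>

definition cnt :: "nat set \<Rightarrow> nat \<Rightarrow> nat" where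
  "cnt X x = card {z. z < x \<and> z \<in> X}"

lemma cnt_enumerate:
  assumes inf: "infinite X"
  shows "cnt X (enumerate X n) = n"
proof -
  have "{z. z < enumerate X n \<and> z \<in> X} = enumerate X ` {..<n}"
  proof (intro set_eqI iffI)
    fix z assume z: "z \<in> {z. z < enumerate X n \<and> z \<in> X}"
    then obtain k where k: "enumerate X k = z" using enumerate_Ex[OF inf] by blast
    then have "k < n" using z inf by auto
    then show "z \<in> enumerate X ` {..<n}" using k by auto
  next
    fix z assume "z \<in> enumerate X ` {..<n}"
    then show "z \<in> {z. z < enumerate X n \<and> z \<in> X}" using inf by (auto intro: enumerate_in_set)
  qed
  moreover have "inj_on (enumerate X) {..<n}" using inj_enumerate[OF inf] by (rule inj_on_subset) simp
  ultimately show ?thesis unfolding cnt_def by (simp add: card_image)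
qed

lemma cnt_bij: assumes inf: "infinite X" shows "bij_betw (cnt X) X UNIV"
proof -
  have "inj_on (cnt X) X"
  proof
    fix x y assume "x \<in> X" "y \<in> X" "cnt X x = cnt X y"
    then obtain a b where "x = enumerate X a" "y = enumerate X b" using enumerate_Ex[OF inf] by metis
    then show "x = y" using \<open>cnt X x = cnt X y\<close> cnt_enumerate[OF inf] by simp
  qed
  moreover have "cnt X ` X = UNIV"
  proof -
    have "n \<in> cnt X ` X" for n using cnt_enumerate[OF inf, of n] enumerate_in_set[OF inf, of n] by (metis image_eqI)
    then show ?thesis by auto
  qed
  ultimately show ?thesis unfolding bij_betw_def by simp
qed

section \<open>The structure A\<close>

definition EA :: "nat rel" where "EA = {(x, y). pd1 x = pd1 y}"
definition AA :: eqstr where "AA = (UNIV, EA)"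

lemma computable_AA: "computable_eqs AA"
  unfolding computable_eqs_def eq_structure_def AA_def
proof (intro conjI)
  show "equiv (fst (UNIV, EA)) (snd (UNIV, EA))"
    by (auto simp: EA_def equiv_def refl_on_def sym_def trans_def)
  show "computable_set (fst (UNIV :: nat set, EA))"
    by (rule cp_set) (simp add: p_const)
  show "computable_rel (snd (UNIV :: nat set, EA))"
    by (simp, rule rel_of_cp) (simp add: EA_def, intro crules)
qed

lemma card_Least:
  assumes "P v" "v \<le> x"
  shows "card {z. z < x \<and> \<not> (\<exists>w<Suc z. P w)} = (LEAST w. P w)"
proof -
  let ?m = "LEAST w. P w"
  have m: "P ?m" "?m \<le> v" using assms(1) by (auto intro: LeastI Least_le)
  have "{z. z < x \<and> \<not> (\<exists>w<Suc z. P w)} = {z. z < ?m}"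
  proof (intro set_eqI iffI)
    fix z assume "z \<in> {z. z < x \<and> \<not> (\<exists>w<Suc z. P w)}"
    then have "\<not> ?m < Suc z" using m(1) by blast
    then show "z \<in> {z. z < ?m}" by simp
  next
    fix z assume "z \<in> {z. z < ?m}"
    then have "z < ?m" by simp
    moreover have "\<not> P w" if "w < Suc z" for w using that \<open>z < ?m\<close> not_less_Least[of w P] by simp
    ultimately show "z \<in> {z. z < x \<and> \<not> (\<exists>w<Suc z. P w)}" using m(2) assms(2) by auto
  qed
  then show ?thesis by simp
qed

lemma cc_main:
  assumes eqv: "equiv U E" and cU: "computable_set U" and cE: "computable_rel E"
    and iso: "isomorphism h (U, E) AA"
  shows "\<exists>f. computable_fun f \<and> isomorphism f (U, E) AA"
proof -
  have hb: "bij_betw h U UNIV" and hE: "\<And>x y. x \<in> U \<Longrightarrow> y \<in> U \<Longrightarrow> (x, y) \<in> E \<longleftrightarrow> pd1 (h x) = pd1 (h y)"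
    using iso unfolding isomorphism_def AA_def EA_def by auto
  have Esub: "E \<subseteq> U \<times> U" and Erefl: "\<And>x. x \<in> U \<Longrightarrow> (x, x) \<in> E"
    and Esym: "\<And>x y. (x, y) \<in> E \<Longrightarrow> (y, x) \<in> E"
    and Etrans: "\<And>x y z. (x, y) \<in> E \<Longrightarrow> (y, z) \<in> E \<Longrightarrow> (x, z) \<in> E"
    using eqv unfolding equiv_def refl_on_def sym_def trans_def by blast+
  have EU: "(x, y) \<in> E \<Longrightarrow> x \<in> U \<and> y \<in> U" for x y using Esub by auto
  define mn where "mn x = card {z. z < x \<and> \<not> (\<exists>w<Suc z. w \<in> U \<and> (w, x) \<in> E)}" for x
  define Mins where "Mins = {z. z \<in> U \<and> (\<forall>w<z. \<not> (w \<in> U \<and> (w, z) \<in> E))}"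
  define Cls where "Cls x = {y. y \<in> U \<and> (y, x) \<in> E}" for x
  define f where "f x = pe (cnt Mins (mn x)) (cnt (Cls x) x)" for x
  have cf: "computable_fun f"
    unfolding f_def mn_def Mins_def Cls_def cnt_def mem_Collect_eq
    by (intro crules p_set[OF cU] p_rel[OF cE])
  have mnL: "x \<in> U \<Longrightarrow> mn x = (LEAST w. w \<in> U \<and> (w, x) \<in> E)" for x
    unfolding mn_def by (rule card_Least[of _ x]) (auto intro: Erefl)
  have mnU: "x \<in> U \<Longrightarrow> mn x \<in> U \<and> (mn x, x) \<in> E" for x
    using mnL[of x] LeastI[of "\<lambda>w. w \<in> U \<and> (w, x) \<in> E" x] Erefl by auto
  have mnMins: "x \<in> U \<Longrightarrow> mn x \<in> Mins" for x
  proof -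
    assume x: "x \<in> U"
    have "\<not> (w \<in> U \<and> (w, mn x) \<in> E)" if "w < mn x" for w
    proof
      assume "w \<in> U \<and> (w, mn x) \<in> E"
      then have "w \<in> U \<and> (w, x) \<in> E" using mnU[OF x] Etrans by blast
      then have "mn x \<le> w" using mnL[OF x] Least_le by metis
      then show False using that by simp
    qed
    then show ?thesis using mnU[OF x] unfolding Mins_def by blast
  qed
  have mnE: "x \<in> U \<Longrightarrow> y \<in> U \<Longrightarrow> (x, y) \<in> E \<longleftrightarrow> mn x = mn y" for x y
  proof
    assume x: "x \<in> U" and y: "y \<in> U" and xy: "(x, y) \<in> E"
    have "(\<lambda>w. w \<in> U \<and> (w, x) \<in> E) = (\<lambda>w. w \<in> U \<and> (w, y) \<in> E)"
      using xy Etrans Esym by blast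
    then show "mn x = mn y" using mnL[OF x] mnL[OF y] by simp
  next
    assume x: "x \<in> U" and y: "y \<in> U" and m: "mn x = mn y"
    show "(x, y) \<in> E" using mnU[OF x] mnU[OF y] m Esym Etrans by metis
  qed
  have minmn: "z \<in> Mins \<Longrightarrow> mn z = z" for z
    unfolding Mins_def using mnL[of z] Erefl by (auto intro!: Least_equality simp: not_less[symmetric])
  define hi where "hi = inv_into U h"
  have hi: "hi n \<in> U" "h (hi n) = n" for n
    using hb unfolding hi_def bij_betw_def by (auto intro: inv_into_into f_inv_into_f)
  have infCls: "infinite (Cls x)" if x: "x \<in> U" for x
  proof -
    let ?g = "\<lambda>k. hi (pe (pd1 (h x)) k)"
    have "inj ?g" by (rule injI) (metis hi(2) pe_eq_iff)
    moreover have "range ?g \<subseteq> Cls x" unfolding Cls_def using hi hE x by auto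
    ultimately show ?thesis using range_inj_infinite infinite_super by blast
  qed
  have infMins: "infinite Mins"
  proof -
    let ?g = "\<lambda>i. mn (hi (pe i 0))"
    have cl: "pd1 (h (?g i)) = i" for i
      using mnU[OF hi(1)[of "pe i 0"]] hE hi by force
    have "inj ?g" by (rule injI) (metis cl)
    moreover have "range ?g \<subseteq> Mins" using mnMins hi by auto
    ultimately show ?thesis using range_inj_infinite infinite_super by blast
  qed
  have ClsE: "(x, y) \<in> E \<Longrightarrow> Cls x = Cls y" for x y
    unfolding Cls_def using Esym Etrans by blast
  have xCls: "x \<in> U \<Longrightarrow> x \<in> Cls x" for x unfolding Cls_def using Erefl by auto
  have bM: "bij_betw (cnt Mins) Mins UNIV" by (rule cnt_bij[OF infMins])
  have inj: "inj_on f U"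
  proof
    fix x y assume x: "x \<in> U" and y: "y \<in> U" and fxy: "f x = f y"
    then have "cnt Mins (mn x) = cnt Mins (mn y)" unfolding f_def by simp
    then have "mn x = mn y" using bM mnMins x y unfolding bij_betw_def inj_on_def by blast
    then have xy: "(x, y) \<in> E" using mnE x y by blast
    then have "cnt (Cls x) x = cnt (Cls x) y" using fxy ClsE[OF xy] unfolding f_def by simp
    moreover have "y \<in> Cls x" using ClsE[OF xy] xCls y by simp
    ultimately show "x = y" using cnt_bij[OF infCls[OF x]] xCls[OF x] unfolding bij_betw_def inj_on_def by blast
  qed
  have surj: "f ` U = UNIV"
  proof (intro set_eqI iffI)
    fix z :: nat
    obtain m where m: "m \<in> Mins" "cnt Mins m = pd1 z" using bM unfolding bij_betw_def by (metis UNIV_I imageE)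
    have mU: "m \<in> U" using m unfolding Mins_def by auto
    obtain x where x: "x \<in> Cls m" "cnt (Cls m) x = pd2 z"
      using cnt_bij[OF infCls[OF mU]] unfolding bij_betw_def by (metis UNIV_I imageE)
    have xU: "x \<in> U" and xm: "(x, m) \<in> E" using x unfolding Cls_def by auto
    have "mn x = m" using mnE[OF xU mU] xm minmn[OF m(1)] by simp
    moreover have "Cls x = Cls m" using ClsE[OF xm] .
    ultimately have "f x = z" unfolding f_def using m x by simp
    then show "z \<in> f ` U" using xU by blast
  qed simp
  have rel: "\<forall>x\<in>U. \<forall>y\<in>U. (x, y) \<in> E \<longleftrightarrow> (f x, f y) \<in> EA"
  proof (intro ballI)
    fix x y assume x: "x \<in> U" and y: "y \<in> U"
    have "(x, y) \<in> E \<longleftrightarrow> mn x = mn y" using mnE x y by blast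
    also have "\<dots> \<longleftrightarrow> cnt Mins (mn x) = cnt Mins (mn y)"
      using inj_on_eq_iff[OF bM[unfolded bij_betw_def, THEN conjunct1] mnMins[OF x] mnMins[OF y]] by simp
    also have "\<dots> \<longleftrightarrow> (f x, f y) \<in> EA" unfolding f_def EA_def by simp
    finally show "(x, y) \<in> E \<longleftrightarrow> (f x, f y) \<in> EA" .
  qed
  have "isomorphism f (U, E) AA"
    unfolding isomorphism_def AA_def bij_betw_def using inj surj rel by simp
  then show ?thesis using cf by blast
qed

lemma cc_AA: "computably_categorical AA"
  unfolding computably_categorical_def
proof (intro allI impI)
  fix B :: eqstr
  assume asm: "computable_eqs B \<and> isomorphic B AA"
  obtain U E where B: "B = (U, E)" by (cases B)
  obtain h where "isomorphism h (U, E) AA" using asm B unfolding isomorphic_def by blast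
  moreover have "equiv U E" "computable_set U" "computable_rel E"
    using asm B unfolding computable_eqs_def eq_structure_def by auto
  ultimately show "\<exists>f. computable_fun f \<and> isomorphism f B AA" using cc_main B by blast
qed

definition Conv :: "nat \<Rightarrow> nat \<Rightarrow> bool" where
  "Conv e t \<longleftrightarrow> (\<forall>j<Suc (2*e). \<exists>y<t. H e (pe j 0) t y)"
definition val :: "nat \<Rightarrow> nat \<Rightarrow> nat \<Rightarrow> nat" where
  "val e j t = card {y. y < t \<and> \<not> (\<exists>w<Suc y. H e (pe j 0) t w)}"
definition Kills :: "nat \<Rightarrow> nat \<Rightarrow> nat \<Rightarrow> bool" where
  "Kills e t n \<longleftrightarrow> (\<exists>j<Suc (2*e). pd1 (val e j t) = n \<and> 2*e \<le> n \<and> (\<forall>i<j. pd1 (val e i t) < 2*e))"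
definition FirstConv :: "nat \<Rightarrow> nat \<Rightarrow> bool" where
  "FirstConv e t \<longleftrightarrow> Conv e t \<and> (\<forall>t'<t. \<not> Conv e t')"
definition killed :: "nat \<Rightarrow> nat \<Rightarrow> bool" where
  "killed n s \<longleftrightarrow> (\<exists>e<s. \<exists>t<Suc s. FirstConv e t \<and> Kills e t n)"
definition UB :: "nat set" where "UB = {z. \<not> killed (pd1 z) (pd2 z)}"
definition EB :: "nat rel" where "EB = {(x, y). x \<in> UB \<and> y \<in> UB \<and> pd1 x = pd1 y}"
definition BB :: eqstr where "BB = (UB, EB)"

lemma cp_killed: "cp (\<lambda>z. killed (pd1 z) (pd2 z))"
  unfolding killed_def FirstConv_def Kills_def val_def Conv_def
  by (intro crules p_H)

lemma cp_UB: "cp (\<lambda>z. z \<in> UB)"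
  unfolding UB_def mem_Collect_eq by (intro p_not cp_killed)

lemma p_UB: "computable_fun a \<Longrightarrow> cp (\<lambda>x. a x \<in> UB)"
  by (rule p_comp[OF cp_UB])

lemma computable_BB: "computable_eqs BB"
  unfolding computable_eqs_def eq_structure_def BB_def fst_conv snd_conv
proof (intro conjI)
  show "equiv UB EB"
    unfolding equiv_def refl_on_def sym_def trans_def EB_def by auto
  show "computable_set UB" by (rule cp_set[OF cp_UB])
  have "cp (\<lambda>z. pd1 z \<in> UB \<and> pd2 z \<in> UB \<and> pd1 (pd1 z) = pd1 (pd2 z))"
    by (intro crules p_UB)
  then have "cp (\<lambda>z. (pd1 z, pd2 z) \<in> EB)" unfolding EB_def by simp
  then show "computable_rel EB" by (rule rel_of_cp)
qed

lemma killed_mono: "killed n s \<Longrightarrow> s \<le> s' \<Longrightarrow> killed n s'"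
  unfolding killed_def by (meson le_imp_less_Suc less_le_trans not_less_eq_eq)

lemma FC_unique: "FirstConv e t \<Longrightarrow> FirstConv e t' \<Longrightarrow> t = t'"
  unfolding FirstConv_def by (meson linorder_neqE_nat)

lemma Kills_unique: "Kills e t n \<Longrightarrow> Kills e t n' \<Longrightarrow> n = n'"
  unfolding Kills_def by (metis linorder_neqE_nat not_le)

lemma Kills_ge: "Kills e t n \<Longrightarrow> 2 * e \<le> n"
  unfolding Kills_def by auto

definition Surv :: "nat set" where "Surv = {n. \<forall>s. \<not> killed n s}"

lemma infinite_Surv: "infinite Surv"
proof
  assume fin: "finite Surv"
  then obtain M where M: "\<forall>n\<in>Surv. n < M" using finite_nat_set_iff_bounded by blast
  define kf where "kf n = (SOME e. \<exists>t. FirstConv e t \<and> Kills e t n)" for n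
  have kfP: "\<exists>t. FirstConv (kf n) t \<and> Kills (kf n) t n" if "M \<le> n" for n
  proof -
    have "n \<notin> Surv" using M that by auto
    then obtain s where "killed n s" unfolding Surv_def by auto
    then have "\<exists>e t. FirstConv e t \<and> Kills e t n" unfolding killed_def by blast
    then show ?thesis unfolding kf_def by (rule someI_ex)
  qed
  have "inj_on kf {M..<2 * Suc M}"
  proof
    fix a b assume a: "a \<in> {M..<2 * Suc M}" and b: "b \<in> {M..<2 * Suc M}" and ab: "kf a = kf b"
    obtain ta where ta: "FirstConv (kf a) ta" "Kills (kf a) ta a" using kfP a by auto
    obtain tb where tb: "FirstConv (kf b) tb" "Kills (kf b) tb b" using kfP b by auto
    have "ta = tb" using FC_unique ta(1) tb(1) ab by simp
    then show "a = b" using Kills_unique ta(2) tb(2) ab by simp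
  qed
  moreover have "kf ` {M..<2 * Suc M} \<subseteq> {..<Suc M}"
  proof
    fix e assume "e \<in> kf ` {M..<2 * Suc M}"
    then obtain n where n: "n \<in> {M..<2 * Suc M}" "e = kf n" by auto
    then obtain t where "Kills e t n" using kfP by auto
    then have "2 * e \<le> n" by (rule Kills_ge)
    then show "e \<in> {..<Suc M}" using n by auto
  qed
  ultimately have "card {M..<2 * Suc M} \<le> card {..<Suc M}"
    by (meson card_inj_on_le finite_lessThan)
  then show False by simp
qed

lemma Surv_UB: "n \<in> Surv \<Longrightarrow> pe n s \<in> UB"
  unfolding Surv_def UB_def by simp

lemma killed_fin: "killed n s0 \<Longrightarrow> z \<in> UB \<Longrightarrow> pd1 z = n \<Longrightarrow> pd2 z < s0"
  unfolding UB_def using killed_mono by (metis mem_Collect_eq not_le)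

lemma emb_BA: "embedding id BB AA"
  unfolding embedding_def BB_def AA_def EA_def EB_def by auto

lemma emb_AB: "embedding (\<lambda>z. pe (enumerate Surv (pd1 z)) (pd2 z)) AA BB"
proof -
  let ?g = "\<lambda>z. pe (enumerate Surv (pd1 z)) (pd2 z)"
  have inS: "enumerate Surv n \<in> Surv" for n by (rule enumerate_in_set[OF infinite_Surv])
  have injE: "inj (enumerate Surv)" by (rule inj_enumerate[OF infinite_Surv])
  have gU: "?g z \<in> UB" for z using Surv_UB[OF inS] .
  have "inj ?g"
  proof (rule injI)
    fix x y assume "?g x = ?g y"
    then have "enumerate Surv (pd1 x) = enumerate Surv (pd1 y)" "pd2 x = pd2 y" by auto
    then have "pd1 x = pd1 y" "pd2 x = pd2 y" using injE by (auto dest: injD)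
    then show "x = y" by (metis pe_pd)
  qed
  moreover have "(x, y) \<in> EA \<longleftrightarrow> (?g x, ?g y) \<in> EB" for x y
    using gU injE unfolding EA_def EB_def by (auto dest: injD)
  ultimately show ?thesis
    unfolding embedding_def AA_def BB_def using gU by auto
qed

lemma bi_BB: "bi_embeddable BB AA"
  unfolding bi_embeddable_def using emb_BA emb_AB by blast

lemma finite_max_time:
  fixes N :: nat and P :: "nat \<Rightarrow> nat \<Rightarrow> bool"
  shows "(\<forall>j<N. \<exists>t0. \<forall>t\<ge>t0. P j t) \<Longrightarrow> \<exists>T. \<forall>j<N. \<forall>t\<ge>T. P j t"
proof (induction N)
  case 0 then show ?case by simp
next
  case (Suc N)
  then obtain T where T: "\<forall>j<N. \<forall>t\<ge>T. P j t" by auto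
  obtain t0 where t0: "\<forall>t\<ge>t0. P N t" using Suc.prems by auto
  show ?case
    by (rule exI[of _ "max T t0"]) (use T t0 in \<open>auto simp: less_Suc_eq\<close>)
qed

lemma val_eq:
  assumes "\<And>w. P w \<longleftrightarrow> w = v" "v < t"
  shows "card {y. y < t \<and> \<not> (\<exists>w<Suc y. P w)} = v"
proof -
  have "card {y. y < t \<and> \<not> (\<exists>w<Suc y. P w)} = (LEAST w. P w)"
    by (rule card_Least[of P v t]) (use assms in auto)
  also have "\<dots> = v" using assms(1) by (auto intro: Least_equality)
  finally show ?thesis .
qed

lemma no_emb:
  assumes cg: "computable_fun g" and emb: "embedding g AA BB"
  shows False
proof -
  obtain p where p: "\<And>x. eval p [x] (g x)" using cg unfolding computable_fun_def by blast
  define e where "e = enc p"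
  have Hiff: "H e x t w \<Longrightarrow> w = g x" for x t w
    unfolding e_def using H_sound eval_det p by blast
  have gU: "g z \<in> UB" for z using emb unfolding embedding_def AA_def BB_def by auto
  have ginj: "inj g" using emb unfolding embedding_def AA_def BB_def by auto
  have gE: "pd1 x = pd1 y \<longleftrightarrow> pd1 (g x) = pd1 (g y)" for x y
    using emb gU unfolding embedding_def AA_def BB_def EA_def EB_def by auto
  have "\<forall>j<Suc (2*e). \<exists>t0. \<forall>t\<ge>t0. H e (pe j 0) t (g (pe j 0))"
    unfolding e_def using H_complete p by blast
  then obtain T where T: "\<forall>j<Suc (2*e). \<forall>t\<ge>T. H e (pe j 0) t (g (pe j 0))"
    using finite_max_time[where P="\<lambda>j t. H e (pe j 0) t (g (pe j 0))"] by blast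
  have "Conv e T" unfolding Conv_def using T H_bound by blast
  define t0 where "t0 = (LEAST t. Conv e t)"
  have C0: "Conv e t0" unfolding t0_def using \<open>Conv e T\<close> by (rule LeastI)
  have FC: "FirstConv e t0" unfolding FirstConv_def using C0 not_less_Least t0_def by blast
  have vals: "val e j t0 = g (pe j 0)" if j: "j < Suc (2*e)" for j
  proof -
    obtain y where y: "y < t0" "H e (pe j 0) t0 y" using C0 j unfolding Conv_def by blast
    have yg: "y = g (pe j 0)" using Hiff[OF y(2)] .
    have H0: "H e (pe j 0) t0 (g (pe j 0))" using y yg by simp
    show ?thesis unfolding val_def
    proof (rule val_eq)
      show "H e (pe j 0) t0 w \<longleftrightarrow> w = g (pe j 0)" for w using Hiff H0 by blast
      show "g (pe j 0) < t0" using y yg by simp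
    qed
  qed
  define cls where "cls j = pd1 (g (pe j 0))" for j
  have injc: "inj_on cls {..<Suc (2*e)}"
    unfolding cls_def inj_on_def using gE by (metis pd1_pe)
  have "\<exists>j<Suc (2*e). 2*e \<le> cls j"
  proof (rule ccontr)
    assume "\<not> ?thesis"
    then have "cls ` {..<Suc (2*e)} \<subseteq> {..<2*e}" by auto
    then have "card {..<Suc (2*e)} \<le> card {..<2*e}"
      using injc by (meson card_inj_on_le finite_lessThan)
    then show False by simp
  qed
  define j0 where "j0 = (LEAST j. j < Suc (2*e) \<and> 2*e \<le> cls j)"
  have j0: "j0 < Suc (2*e)" "2*e \<le> cls j0"
    using LeastI_ex[OF \<open>\<exists>j<Suc (2*e). 2*e \<le> cls j\<close>[unfolded Bex_def[symmetric]]] unfolding j0_def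
    by auto
  have j0min: "i < j0 \<Longrightarrow> cls i < 2*e" for i
    using not_less_Least[of i "\<lambda>j. j < Suc (2*e) \<and> 2*e \<le> cls j"] j0(1) unfolding j0_def[symmetric] by auto
  define n0 where "n0 = cls j0"
  have K: "Kills e t0 n0"
    unfolding Kills_def n0_def
    apply (rule exI[of _ j0])
    using j0 j0min vals cls_def by auto
  define S0 where "S0 = Suc e + t0"
  have kd: "killed n0 S0" unfolding killed_def S0_def
    apply (rule exI[of _ e])
    apply (rule conjI, simp)
    apply (rule exI[of _ t0])
    using FC K by simp
  have rng: "g (pe j0 k) \<in> (\<lambda>s. pe n0 s) ` {..<S0}" for k
  proof -
    have c: "pd1 (g (pe j0 k)) = n0" unfolding n0_def cls_def using gE[of "pe j0 k" "pe j0 0"] by simp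
    have "pd2 (g (pe j0 k)) < S0" by (rule killed_fin[OF kd gU c])
    then show ?thesis using c by (metis image_eqI lessThan_iff pe_pd)
  qed
  have "inj (\<lambda>k. g (pe j0 k))" using ginj by (auto intro!: injI dest: injD)
  then have "infinite (range (\<lambda>k. g (pe j0 k)))" by (rule range_inj_infinite)
  moreover have "range (\<lambda>k. g (pe j0 k)) \<subseteq> (\<lambda>s. pe n0 s) ` {..<S0}" using rng by auto
  ultimately show False using finite_surj by blast
qed

theorem main: "\<exists>\<A>. computable_eqs \<A> \<and> computably_categorical \<A> \<and>
           \<not> computably_bi_embeddably_categorical \<A>"
proof (intro exI conjI)
  show "computable_eqs AA" by (rule computable_AA)
  show "computably_categorical AA" by (rule cc_AA)
  show "\<not> computably_bi_embeddably_categorical AA"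
    unfolding computably_bi_embeddably_categorical_def
    using computable_BB bi_BB no_emb by blast
qed

theorem corollary2p8:
  shows "\<exists>\<A>. computable_eqs \<A> \<and> computably_categorical \<A> \<and>
           \<not> computably_bi_embeddably_categorical \<A>"
  by (rule main)

end
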